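(* Let $\mathbf{a}=(a_1,a_2,a_3,a_4)\in\mathbb C^4$ and let $$S_{\mathbf a}=\{(x_1,x_2,x_3)\in\mathbb C^3 : x_1^2+x_2^2+x_3^2+x_1x_2x_3=a_1x_1+a_2x_2+a_3x_3+a_4\},$$ equipped with the holomorphic symplectic form $$\Omega=\frac{dx_1\wedge dx_2}{2x_3+x_1x_2-a_3}=\frac{dx_2\wedge dx_3}{2x_1+x_2x_3-a_1}=\frac{dx_3\wedge dx_1}{2x_2+x_1x_3-a_2}.$$ Let $\mathcal F_1=\ker(dx_1)$ and $\mathcal F_2=\ker(dx_2)$ restricted to $S_{\mathbf a}$, considered on the open set of smooth points where they are transversal. Then the Hess connection of the bi-Lagrangian manifold $(S_{\mathbf a},\Omega,\mathcal F_1,\mathcal F_2)$ is flat if and only if $\mathbf a=(0,0,0,4)$.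
   Context: A bi-Lagrangian structure on a (holomorphic) symplectic manifold $(M,\omega)$ is a pair of transversal Lagrangian foliations; on a surface, any pair of transversal foliations by curves is bi-Lagrangian. The Hess connection of a bi-Lagrangian manifold $(M,\omega,\mathcal F_1,\mathcal F_2)$ is the unique torsion-free affine connection $\nabla$ on $TM$ such that $X\cdot\omega(Y,Z)=\omega(\nabla_XY,Z)+\omega(Y,\nabla_XZ)$ for all vector fields $X,Y,Z$, and $\nabla_XY$ is tangent to $\mathcal F_j$ whenever $Y$ is tangent to $\mathcal F_j$ ($j=1,2$). It is flat if its curvature $R(X,Y)Z=\nabla_X\nabla_YZ-\nabla_Y\nabla_XZ-\nabla_{[X,Y]}Z$ vanishes identically. *)

theory Defs
  imports "HOL-Analysis.Analysis"
begin

text \<open>Points of the chart domain are pairs (x1, x2) in C^2. Coordinate indices are 0 (for x1)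
and 1 (for x2).\<close>

definition holo2 :: "(complex \<times> complex) set \<Rightarrow> (complex \<times> complex \<Rightarrow> complex) \<Rightarrow> bool" where
  "holo2 V f \<longleftrightarrow>
     (\<forall>p\<in>V. \<exists>c1 c2. (f has_derivative (\<lambda>h. c1 * fst h + c2 * snd h)) (at p))"

definition pd :: "nat \<Rightarrow> (complex \<times> complex \<Rightarrow> complex) \<Rightarrow> complex \<times> complex \<Rightarrow> complex" where
  "pd i f p = (if i = 0 then deriv (\<lambda>t. f (t, snd p)) (fst p)
                         else deriv (\<lambda>t. f (fst p, t)) (snd p))"

definition on_S :: "complex \<Rightarrow> complex \<Rightarrow> complex \<Rightarrow> complex \<Rightarrow> complex \<Rightarrow> complex \<Rightarrow> complex \<Rightarrow> bool" where
  "on_S a1 a2 a3 a4 x1 x2 x3 \<longleftrightarrow>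
     x1^2 + x2^2 + x3^2 + x1*x2*x3 = a1*x1 + a2*x2 + a3*x3 + a4"

text \<open>An (x1,x2)-chart of the open set U of S_a where F1 = ker dx1 and F2 = ker dx2 are
transversal (equivalently, where 2x3 + x1x2 - a3 \<noteq> 0; these points are smooth):
an open V in C^2 and a holomorphic x3 = phi(x1,x2) whose graph lies in U.
Such charts cover U (implicit function theorem).\<close>
definition x12_chart :: "complex \<Rightarrow> complex \<Rightarrow> complex \<Rightarrow> complex \<Rightarrow>
    (complex \<times> complex) set \<Rightarrow> (complex \<times> complex \<Rightarrow> complex) \<Rightarrow> bool" where
  "x12_chart a1 a2 a3 a4 V \<phi> \<longleftrightarrow> open V \<and> holo2 V \<phi> \<and>
     (\<forall>p\<in>V. on_S a1 a2 a3 a4 (fst p) (snd p) (\<phi> p) \<and>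
             2 * \<phi> p + fst p * snd p - a3 \<noteq> 0)"

text \<open>Components omega_{jk} = Omega(d_j, d_k) of the symplectic form in the chart:
Omega = dx1 \<and> dx2 / (2x3 + x1x2 - a3).\<close>
definition omega :: "complex \<Rightarrow> (complex \<times> complex \<Rightarrow> complex) \<Rightarrow> nat \<Rightarrow> nat \<Rightarrow>
    complex \<times> complex \<Rightarrow> complex" where
  "omega a3 \<phi> j k p =
     (if j = 0 \<and> k = 1 then 1 / (2 * \<phi> p + fst p * snd p - a3)
      else if j = 1 \<and> k = 0 then - (1 / (2 * \<phi> p + fst p * snd p - a3))
      else 0)"

text \<open>Christoffel symbols: Gamma k i j p is the d_k-component of nabla_{d_i} d_j at p.
The Hess conditions in the coordinate frame: holomorphic, torsion-free, Omega parallel,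
and preserving F1 (tangent to d_1, i.e. x1 = const) and F2 (tangent to d_0).\<close>
definition hess_conn :: "complex \<Rightarrow> (complex \<times> complex) set \<Rightarrow> (complex \<times> complex \<Rightarrow> complex) \<Rightarrow>
    (nat \<Rightarrow> nat \<Rightarrow> nat \<Rightarrow> complex \<times> complex \<Rightarrow> complex) \<Rightarrow> bool" where
  "hess_conn a3 V \<phi> \<Gamma> \<longleftrightarrow>
     (\<forall>i<2. \<forall>j<2. \<forall>k<2. holo2 V (\<Gamma> k i j)) \<and>
     (\<forall>p\<in>V. \<forall>i<2. \<forall>j<2. \<forall>k<2.
        \<Gamma> k i j p = \<Gamma> k j i p \<and>
        pd i (omega a3 \<phi> j k) p =
          (\<Sum>l<2. \<Gamma> l i j p * omega a3 \<phi> l k p) + (\<Sum>l<2. \<Gamma> l i k p * omega a3 \<phi> j l p)) \<and>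
     (\<forall>p\<in>V. \<forall>i<2. \<Gamma> 0 i 1 p = 0 \<and> \<Gamma> 1 i 0 p = 0)"

text \<open>Curvature components: R(d_i,d_j) d_k = sum_l curv l k i j d_l.\<close>
definition curv :: "(nat \<Rightarrow> nat \<Rightarrow> nat \<Rightarrow> complex \<times> complex \<Rightarrow> complex) \<Rightarrow>
    nat \<Rightarrow> nat \<Rightarrow> nat \<Rightarrow> nat \<Rightarrow> complex \<times> complex \<Rightarrow> complex" where
  "curv \<Gamma> l k i j p =
     pd i (\<Gamma> l j k) p - pd j (\<Gamma> l i k) p +
     (\<Sum>m<2. \<Gamma> l i m p * \<Gamma> m j k p - \<Gamma> l j m p * \<Gamma> m i k p)"

definition flat_on :: "(complex \<times> complex) set \<Rightarrow> (nat \<Rightarrow> nat \<Rightarrow> nat \<Rightarrow> complex \<times> complex \<Rightarrow> complex) \<Rightarrow> bool" where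
  "flat_on V \<Gamma> \<longleftrightarrow> (\<forall>p\<in>V. \<forall>l<2. \<forall>k<2. \<forall>i<2. \<forall>j<2. curv \<Gamma> l k i j p = 0)"

text \<open>The Hess connection of (S_a, Omega, F1, F2) on the transversality locus is flat:
in every (x1,x2)-chart, the (unique) Hess connection has vanishing curvature.\<close>
definition hess_flat :: "complex \<Rightarrow> complex \<Rightarrow> complex \<Rightarrow> complex \<Rightarrow> bool" where
  "hess_flat a1 a2 a3 a4 \<longleftrightarrow>
     (\<forall>V \<phi> \<Gamma>. x12_chart a1 a2 a3 a4 V \<phi> \<and> hess_conn a3 V \<phi> \<Gamma> \<longrightarrow> flat_on V \<Gamma>)"

end

theory Submission
  imports Defs
begin

definition Dl :: "complex \<Rightarrow> complex \<Rightarrow> complex \<Rightarrow> complex \<Rightarrow> complex \<Rightarrow> complex \<Rightarrow> complex" where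
  "Dl a1 a2 a3 a4 x y = (x*y - a3)^2 - 4*(x^2+y^2-a1*x-a2*y-a4)"
definition Du :: "complex \<Rightarrow> complex \<Rightarrow> complex \<Rightarrow> complex \<Rightarrow> complex" where
  "Du a1 a3 x y = 2*x*y^2 - 2*a3*y - 8*x + 4*a1"
definition Dv :: "complex \<Rightarrow> complex \<Rightarrow> complex \<Rightarrow> complex \<Rightarrow> complex" where
  "Dv a2 a3 x y = 2*x^2*y - 2*a3*x - 8*y + 4*a2"
lemma quad_roots_finite:
  fixes c0 c1 c2 :: complex
  assumes "c0 \<noteq> 0 \<or> c1 \<noteq> 0 \<or> c2 \<noteq> 0"
  shows "finite {y. c0 + c1 * y + c2 * y^2 = 0}"
proof -
  define c where "c i = (if i = 0 then c0 else if i = 1 then c1 else c2)" for i :: nat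
  have "\<exists>k. k \<le> 2 \<and> c k \<noteq> 0"
  proof (cases "c0 \<noteq> 0")
    case True then show ?thesis by (intro exI[of _ 0]) (simp add: c_def)
  next
    case F: False
    show ?thesis
    proof (cases "c1 \<noteq> 0")
      case True then show ?thesis by (intro exI[of _ 1]) (simp add: c_def)
    next
      case False then show ?thesis using F assms by (intro exI[of _ 2]) (simp add: c_def)
    qed
  qed
  from polyfun_rootbound_finite[OF this]
  have "finite {z. c2 * (z * z) + (c1 * z + c0) = 0}"
    by (simp add: c_def numeral_2_eq_2 atMost_Suc)
  moreover have "{y. c0 + c1 * y + c2 * y^2 = 0} = {z. c2 * (z * z) + (c1 * z + c0) = 0}"
    by (auto simp: power2_eq_square add_ac)
  ultimately show ?thesis by simp
qed

lemma two_quads: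
  fixes c0 c1 c2 d0 d1 d2 :: complex
  assumes "c0 \<noteq> 0 \<or> c1 \<noteq> 0 \<or> c2 \<noteq> 0" "d0 \<noteq> 0 \<or> d1 \<noteq> 0 \<or> d2 \<noteq> 0"
  shows "\<exists>y. c0 + c1 * y + c2 * y^2 \<noteq> 0 \<and> d0 + d1 * y + d2 * y^2 \<noteq> 0"
proof -
  have "finite ({y. c0 + c1 * y + c2 * y^2 = 0} \<union> {y. d0 + d1 * y + d2 * y^2 = 0})"
    using quad_roots_finite[OF assms(1)] quad_roots_finite[OF assms(2)] by simp
  then obtain y where "y \<notin> {y. c0 + c1 * y + c2 * y^2 = 0} \<union> {y. d0 + d1 * y + d2 * y^2 = 0}"
    using ex_new_if_finite[OF infinite_UNIV_char_0] by blast
  then show ?thesis by auto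
qed

definition Pf :: "complex \<Rightarrow> complex \<Rightarrow> complex \<Rightarrow> complex \<Rightarrow> complex \<Rightarrow> complex \<Rightarrow> complex" where
  "Pf a1 a2 a3 a4 x y = Dl a1 a2 a3 a4 x y * (4*x*y - 2*a3) - Du a1 a3 x y * Dv a2 a3 x y"

lemma exists_point:
  assumes "\<not> (a1 = 0 \<and> a2 = 0 \<and> a3 = 0 \<and> a4 = 4)"
  shows "\<exists>x y. Dl a1 a2 a3 a4 x y \<noteq> 0 \<and> Pf a1 a2 a3 a4 x y \<noteq> 0"
proof -
  consider (A) "a1 \<noteq> 0 \<or> a3 \<noteq> 0" | (B) "a1 = 0" "a3 = 0" "a2 \<noteq> 0" | (C) "a1 = 0" "a2 = 0" "a3 = 0" "a4 \<noteq> 4"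
    using assms by blast
  then show ?thesis
  proof cases
    case A
    have "\<exists>y. (a3^2+4*a4 + (4*a2) * y + (-4) * y^2) \<noteq> 0 \<and> (-2*a3^3-8*a3*a4-16*a1*a2 + (32*a1) * y + (-8*a3) * y^2) \<noteq> 0"
      by (rule two_quads) (use A in auto)
    then obtain y where "(a3^2+4*a4 + (4*a2) * y + (-4) * y^2) \<noteq> 0" "(-2*a3^3-8*a3*a4-16*a1*a2 + (32*a1) * y + (-8*a3) * y^2) \<noteq> 0"
      by blast
    moreover have dl: "(a3^2+4*a4 + (4*a2) * y + (-4) * y^2) = Dl a1 a2 a3 a4 0 y"
      by (simp add: Dl_def algebra_simps power2_eq_square)
    moreover have "(-2*a3^3-8*a3*a4-16*a1*a2 + (32*a1) * y + (-8*a3) * y^2) = Pf a1 a2 a3 a4 0 y"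
      unfolding Pf_def dl[symmetric] by (simp add: Du_def Dv_def algebra_simps power2_eq_square power3_eq_cube)
    ultimately show ?thesis by metis
  next
    case B
    have "\<exists>x. (a3^2+4*a4 + (4*a1) * x + (-4) * x^2) \<noteq> 0 \<and> (-2*a3^3-8*a3*a4-16*a1*a2 + (32*a2) * x + (-8*a3) * x^2) \<noteq> 0"
      by (rule two_quads) (use B in auto)
    then obtain x where "(a3^2+4*a4 + (4*a1) * x + (-4) * x^2) \<noteq> 0" "(-2*a3^3-8*a3*a4-16*a1*a2 + (32*a2) * x + (-8*a3) * x^2) \<noteq> 0"
      by blast
    moreover have dl: "(a3^2+4*a4 + (4*a1) * x + (-4) * x^2) = Dl a1 a2 a3 a4 x 0"
      by (simp add: Dl_def algebra_simps power2_eq_square)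
    moreover have "(-2*a3^3-8*a3*a4-16*a1*a2 + (32*a2) * x + (-8*a3) * x^2) = Pf a1 a2 a3 a4 x 0"
      unfolding Pf_def dl[symmetric] by (simp add: Du_def Dv_def algebra_simps power2_eq_square power3_eq_cube)
    ultimately show ?thesis by metis
  next
    case C
    have "Dl a1 a2 a3 a4 1 2 = 4*a4 - 16" "Pf a1 a2 a3 a4 1 2 = 8*(4*a4 - 16)"
      using C by (simp_all add: Pf_def Dl_def Du_def Dv_def)
    moreover have "4*a4 - 16 \<noteq> 0" using C by auto
    ultimately show ?thesis by (metis mult_eq_0_iff zero_neq_numeral)
  qed
qed

definition cd :: "(complex \<times> complex \<Rightarrow> complex) \<Rightarrow> complex \<times> complex \<Rightarrow> bool" where
  "cd f p \<longleftrightarrow> (\<exists>c1 c2. (f has_derivative (\<lambda>h. c1 * fst h + c2 * snd h)) (at p))"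

lemma cd_intro:
  assumes "(f has_derivative F) (at p)" "\<And>h. F h = c1 * fst h + c2 * snd h"
  shows "cd f p"
proof -
  have "F = (\<lambda>h. c1 * fst h + c2 * snd h)" using assms(2) by auto
  then show ?thesis using assms(1) unfolding cd_def by blast
qed

lemma cd_const[simp]: "cd (\<lambda>q. k) p"
  unfolding cd_def by (rule exI[of _ 0], rule exI[of _ 0]) (simp add: has_derivative_const)

lemma cd_fst[simp]: "cd fst p"
  unfolding cd_def by (rule exI[of _ 1], rule exI[of _ 0]) (simp add: has_derivative_fst[OF has_derivative_ident])

lemma cd_snd[simp]: "cd snd p"
  unfolding cd_def by (rule exI[of _ 0], rule exI[of _ 1]) (simp add: has_derivative_snd[OF has_derivative_ident])

lemma cd_add: assumes "cd f p" "cd g p" shows "cd (\<lambda>q. f q + g q) p"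
proof -
  obtain a1 a2 where A: "(f has_derivative (\<lambda>h. a1 * fst h + a2 * snd h)) (at p)" using assms(1) cd_def by blast
  obtain b1 b2 where B: "(g has_derivative (\<lambda>h. b1 * fst h + b2 * snd h)) (at p)" using assms(2) cd_def by blast
  show ?thesis by (rule cd_intro[OF has_derivative_add[OF A B], of "a1+b1" "a2+b2"]) (simp add: algebra_simps)
qed

lemma cd_mult: assumes "cd f p" "cd g p" shows "cd (\<lambda>q. f q * g q) p"
proof -
  obtain a1 a2 where A: "(f has_derivative (\<lambda>h. a1 * fst h + a2 * snd h)) (at p)" using assms(1) cd_def by blast
  obtain b1 b2 where B: "(g has_derivative (\<lambda>h. b1 * fst h + b2 * snd h)) (at p)" using assms(2) cd_def by blast
  show ?thesis by (rule cd_intro[OF has_derivative_mult[OF A B], of "f p * b1 + a1 * g p" "f p * b2 + a2 * g p"]) (simp add: algebra_simps)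
qed

lemma cd_comp: assumes "(h has_field_derivative d) (at (f p))" "cd f p" shows "cd (\<lambda>q. h (f q)) p"
proof -
  obtain a1 a2 where A: "(f has_derivative (\<lambda>h. a1 * fst h + a2 * snd h)) (at p)" using assms(2) cd_def by blast
  show ?thesis by (rule cd_intro[OF has_derivative_compose[OF A assms(1)[unfolded has_field_derivative_def]], of "d*a1" "d*a2"]) (simp add: algebra_simps)
qed

lemma cd_uminus: "cd f p \<Longrightarrow> cd (\<lambda>q. - f q) p"
proof -
  have "((\<lambda>z. -z) has_field_derivative -1) (at (f p))" by (auto intro!: derivative_eq_intros)
  then show "cd f p \<Longrightarrow> cd (\<lambda>q. - f q) p" using cd_comp by blast
qed

lemma cd_diff: "cd f p \<Longrightarrow> cd g p \<Longrightarrow> cd (\<lambda>q. f q - g q) p"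
  using cd_add[of f p "\<lambda>q. - g q"] cd_uminus[of g p] by simp

lemma cd_power: "cd f p \<Longrightarrow> cd (\<lambda>q. f q ^ n) p"
  using cd_comp[OF DERIV_power[OF DERIV_ident]] by blast

lemma cd_divide: "cd f p \<Longrightarrow> cd g p \<Longrightarrow> g p \<noteq> 0 \<Longrightarrow> cd (\<lambda>q. f q / g q) p"
proof -
  assume a: "cd f p" "cd g p" "g p \<noteq> 0"
  have "cd (\<lambda>q. inverse (g q)) p"
    using cd_comp[OF DERIV_inverse[OF a(3)] a(2)] by simp
  from cd_mult[OF a(1) this] show ?thesis by (simp add: divide_inverse)
qed

lemma cd_csqrt: "cd f p \<Longrightarrow> Re (f p) > 0 \<Longrightarrow> cd (\<lambda>q. csqrt (f q)) p"
  apply (rule cd_comp[OF has_field_derivative_csqrt])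
  by (auto simp: complex_nonpos_Reals_iff)

lemma cd_partials:
  assumes "(f has_derivative (\<lambda>h. c1 * fst h + c2 * snd h)) (at p)"
  shows "((\<lambda>t. f (t, snd p)) has_field_derivative c1) (at (fst p))"
    "((\<lambda>t. f (fst p, t)) has_field_derivative c2) (at (snd p))"
proof -
  have a': "(f has_derivative (\<lambda>h. c1 * fst h + c2 * snd h)) (at (fst p, snd p))" using assms by simp
  have "((\<lambda>t. (t, snd p)) has_derivative (\<lambda>h. (h, 0))) (at (fst p))"
    by (auto intro!: derivative_eq_intros)
  from has_derivative_compose[OF this a']
  have 1: "((\<lambda>t. f (t, snd p)) has_derivative (\<lambda>x. c1 * fst (x, 0) + c2 * snd (x, 0))) (at (fst p))" by simp
  have e1: "(\<lambda>x. c1 * fst (x, 0) + c2 * snd (x, 0)) = (*) c1" by (rule ext) simp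
  show "((\<lambda>t. f (t, snd p)) has_field_derivative c1) (at (fst p))"
    using 1 unfolding e1 has_field_derivative_def .
  have "((\<lambda>t. (fst p, t)) has_derivative (\<lambda>h. (0, h))) (at (snd p))"
    by (auto intro!: derivative_eq_intros)
  from has_derivative_compose[OF this a']
  have 2: "((\<lambda>t. f (fst p, t)) has_derivative (\<lambda>x. c1 * fst (0, x) + c2 * snd (0, x))) (at (snd p))" by simp
  have e2: "(\<lambda>x. c1 * fst (0, x) + c2 * snd (0, x)) = (*) c2" by (rule ext) simp
  show "((\<lambda>t. f (fst p, t)) has_field_derivative c2) (at (snd p))"
    using 2 unfolding e2 has_field_derivative_def .
qed

definition G0 :: "complex \<Rightarrow> complex \<Rightarrow> complex \<Rightarrow> complex \<Rightarrow> complex \<times> complex \<Rightarrow> complex" where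
  "G0 a1 a2 a3 a4 q = - Du a1 a3 (fst q) (snd q) / (2 * Dl a1 a2 a3 a4 (fst q) (snd q))"
definition G1 :: "complex \<Rightarrow> complex \<Rightarrow> complex \<Rightarrow> complex \<Rightarrow> complex \<times> complex \<Rightarrow> complex" where
  "G1 a1 a2 a3 a4 q = - Dv a2 a3 (fst q) (snd q) / (2 * Dl a1 a2 a3 a4 (fst q) (snd q))"

lemma on_S_iff: "on_S a1 a2 a3 a4 x y z \<longleftrightarrow> (2*z + x*y - a3)^2 = Dl a1 a2 a3 a4 x y"
proof -
  have "(2*z+x*y-a3)^2 - Dl a1 a2 a3 a4 x y = 4*((x^2+y^2+z^2+x*y*z) - (a1*x+a2*y+a3*z+a4))"
    by (simp add: Dl_def power2_eq_square algebra_simps)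
  then show ?thesis unfolding on_S_def by (metis eq_iff_diff_eq_0 mult_eq_0_iff zero_neq_numeral)
qed

lemma Dl_dx: "((\<lambda>t. Dl a1 a2 a3 a4 t y) has_field_derivative Du a1 a3 x y) (at x)"
  unfolding Dl_def Du_def
  by (rule derivative_eq_intros refl | simp)+ (simp add: algebra_simps power2_eq_square)

lemma Dl_dy: "((\<lambda>t. Dl a1 a2 a3 a4 x t) has_field_derivative Dv a2 a3 x y) (at y)"
  unfolding Dl_def Dv_def
  by (rule derivative_eq_intros refl | simp)+ (simp add: algebra_simps power2_eq_square)

lemma chart_deriv:
  assumes ch: "x12_chart a1 a2 a3 a4 V \<phi>" and pV: "p \<in> V"
  shows "((\<lambda>t. 1 / (2 * \<phi> (t, snd p) + t * snd p - a3)) has_field_derivative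
            (G0 a1 a2 a3 a4 p / (2 * \<phi> p + fst p * snd p - a3))) (at (fst p))"
    "((\<lambda>t. 1 / (2 * \<phi> (fst p, t) + fst p * t - a3)) has_field_derivative
            (G1 a1 a2 a3 a4 p / (2 * \<phi> p + fst p * snd p - a3))) (at (snd p))"
proof -
  obtain x y where p: "p = (x, y)" by (cases p)
  have oV: "open V" and hol: "holo2 V \<phi>" and onS: "\<And>q. q \<in> V \<Longrightarrow> on_S a1 a2 a3 a4 (fst q) (snd q) (\<phi> q)"
    and nz: "\<And>q. q \<in> V \<Longrightarrow> 2 * \<phi> q + fst q * snd q - a3 \<noteq> 0"
    using ch unfolding x12_chart_def by auto
  obtain c1 c2 where hd: "(\<phi> has_derivative (\<lambda>h. c1 * fst h + c2 * snd h)) (at p)"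
    using hol pV unfolding holo2_def by blast
  note pa = cd_partials[OF hd, unfolded p fst_conv snd_conv]
  define D where "D = 2 * \<phi> p + x * y - a3"
  have Dnz: "D \<noteq> 0" using nz[OF pV] unfolding D_def p by simp
  have DD: "D^2 = Dl a1 a2 a3 a4 x y" using onS[OF pV] unfolding D_def p on_S_iff by simp
  have Dlnz: "Dl a1 a2 a3 a4 x y \<noteq> 0" using Dnz DD by auto
  have Dnz': "2 * \<phi> (x, y) + x * y - a3 \<noteq> 0" using Dnz by (simp add: D_def p)
  have S1: "open ((\<lambda>t. (t, y)) -` V)"
    by (rule continuous_open_vimage[OF oV]) (auto intro!: continuous_intros)
  have x1: "x \<in> (\<lambda>t. (t, y)) -` V" using pV p by simp
  have d1: "((\<lambda>t. (2 * \<phi> (t, y) + t * y - a3)^2) has_field_derivative 2 * D * (2*c1 + y)) (at x)"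
    by (rule derivative_eq_intros pa refl | simp)+ (simp add: D_def p algebra_simps)
  have d1': "((\<lambda>t. Dl a1 a2 a3 a4 t y) has_field_derivative 2 * D * (2*c1 + y)) (at x)"
    apply (rule has_field_derivative_transform_within_open[OF d1 S1 x1])
    using onS unfolding on_S_iff by auto
  have e1: "Du a1 a3 x y = 2 * D * (2*c1 + y)" using DERIV_unique[OF Dl_dx d1'] .
  have "((\<lambda>t. 1 / (2 * \<phi> (t, y) + t * y - a3)) has_field_derivative - (2*c1 + y) / D^2) (at x)"
    by (rule derivative_eq_intros pa refl)+
       (use Dnz' in \<open>simp_all add: D_def p field_simps power2_eq_square\<close>)
  moreover have "- (2*c1 + y) / D^2 = G0 a1 a2 a3 a4 p / D"
    unfolding G0_def p fst_conv snd_conv e1 DD[symmetric] using Dnz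
    by (simp add: field_simps power2_eq_square)
  ultimately show "((\<lambda>t. 1 / (2 * \<phi> (t, snd p) + t * snd p - a3)) has_field_derivative
            (G0 a1 a2 a3 a4 p / (2 * \<phi> p + fst p * snd p - a3))) (at (fst p))"
    unfolding p D_def by simp
  have S2: "open ((\<lambda>t. (x, t)) -` V)"
    by (rule continuous_open_vimage[OF oV]) (auto intro!: continuous_intros)
  have y2: "y \<in> (\<lambda>t. (x, t)) -` V" using pV p by simp
  have d2: "((\<lambda>t. (2 * \<phi> (x, t) + x * t - a3)^2) has_field_derivative 2 * D * (2*c2 + x)) (at y)"
    by (rule derivative_eq_intros pa refl | simp)+ (simp add: D_def p algebra_simps)
  have d2': "((\<lambda>t. Dl a1 a2 a3 a4 x t) has_field_derivative 2 * D * (2*c2 + x)) (at y)"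
    apply (rule has_field_derivative_transform_within_open[OF d2 S2 y2])
    using onS unfolding on_S_iff by auto
  have e2: "Dv a2 a3 x y = 2 * D * (2*c2 + x)" using DERIV_unique[OF Dl_dy d2'] .
  have "((\<lambda>t. 1 / (2 * \<phi> (x, t) + x * t - a3)) has_field_derivative - (2*c2 + x) / D^2) (at y)"
    by (rule derivative_eq_intros pa refl)+
       (use Dnz' in \<open>simp_all add: D_def p field_simps power2_eq_square\<close>)
  moreover have "- (2*c2 + x) / D^2 = G1 a1 a2 a3 a4 p / D"
    unfolding G1_def p fst_conv snd_conv e2 DD[symmetric] using Dnz
    by (simp add: field_simps power2_eq_square)
  ultimately show "((\<lambda>t. 1 / (2 * \<phi> (fst p, t) + fst p * t - a3)) has_field_derivative
            (G1 a1 a2 a3 a4 p / (2 * \<phi> p + fst p * snd p - a3))) (at (snd p))"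
    unfolding p D_def by simp
qed

definition hG :: "complex \<Rightarrow> complex \<Rightarrow> complex \<Rightarrow> complex \<Rightarrow> nat \<Rightarrow> nat \<Rightarrow> nat \<Rightarrow> complex \<times> complex \<Rightarrow> complex" where
  "hG a1 a2 a3 a4 k i j = (if k = 0 \<and> i = 0 \<and> j = 0 then G0 a1 a2 a3 a4
      else if k = 1 \<and> i = 1 \<and> j = 1 then G1 a1 a2 a3 a4 else (\<lambda>_. 0))"

lemma sum2: "(\<Sum>l<(2::nat). f l) = f 0 + f 1"
  by (simp add: numeral_2_eq_2)

lemma all_less2: "(\<forall>n<(2::nat). P n) \<longleftrightarrow> P 0 \<and> P 1"
  by (auto simp: numeral_2_eq_2 less_Suc_eq)

lemma pd_cong:
  assumes "open V" "p \<in> V" "\<And>q. q \<in> V \<Longrightarrow> f q = g q"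
  shows "pd i f p = pd i g p"
proof -
  obtain x y where p: "p = (x, y)" by (cases p)
  have S1: "open ((\<lambda>t. (t, y)) -` V)"
    by (rule continuous_open_vimage[OF assms(1)]) (auto intro!: continuous_intros)
  have S2: "open ((\<lambda>t. (x, t)) -` V)"
    by (rule continuous_open_vimage[OF assms(1)]) (auto intro!: continuous_intros)
  have e1: "eventually (\<lambda>t. f (t, y) = g (t, y)) (nhds x)"
    unfolding eventually_nhds using S1 assms p by (intro exI[of _ "(\<lambda>t. (t, y)) -` V"]) auto
  have e2: "eventually (\<lambda>t. f (x, t) = g (x, t)) (nhds y)"
    unfolding eventually_nhds using S2 assms p by (intro exI[of _ "(\<lambda>t. (x, t)) -` V"]) auto
  show ?thesis unfolding pd_def p using deriv_cong_ev[OF e1 refl] deriv_cong_ev[OF e2 refl] by simp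
qed

lemma pd_zero[simp]: "pd i (\<lambda>_. 0) p = 0"
  by (simp add: pd_def)

lemma chart_pd:
  assumes ch: "x12_chart a1 a2 a3 a4 V \<phi>" and pV: "p \<in> V"
  shows "pd 0 (omega a3 \<phi> 0 1) p = G0 a1 a2 a3 a4 p * omega a3 \<phi> 0 1 p"
        "pd 1 (omega a3 \<phi> 0 1) p = G1 a1 a2 a3 a4 p * omega a3 \<phi> 0 1 p"
        "pd 0 (omega a3 \<phi> 1 0) p = - (G0 a1 a2 a3 a4 p * omega a3 \<phi> 0 1 p)"
        "pd 1 (omega a3 \<phi> 1 0) p = - (G1 a1 a2 a3 a4 p * omega a3 \<phi> 0 1 p)"
        "pd i (omega a3 \<phi> 0 0) p = 0" "pd i (omega a3 \<phi> 1 1) p = 0"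
proof -
  note d = chart_deriv[OF ch pV]
  show "pd 0 (omega a3 \<phi> 0 1) p = G0 a1 a2 a3 a4 p * omega a3 \<phi> 0 1 p"
    using DERIV_imp_deriv[OF d(1)] by (simp add: pd_def omega_def)
  show "pd 1 (omega a3 \<phi> 0 1) p = G1 a1 a2 a3 a4 p * omega a3 \<phi> 0 1 p"
    using DERIV_imp_deriv[OF d(2)] by (simp add: pd_def omega_def)
  show "pd 0 (omega a3 \<phi> 1 0) p = - (G0 a1 a2 a3 a4 p * omega a3 \<phi> 0 1 p)"
    using DERIV_imp_deriv[OF DERIV_minus[OF d(1)]] by (simp add: pd_def omega_def)
  show "pd 1 (omega a3 \<phi> 1 0) p = - (G1 a1 a2 a3 a4 p * omega a3 \<phi> 0 1 p)"
    using DERIV_imp_deriv[OF DERIV_minus[OF d(2)]] by (simp add: pd_def omega_def)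
  show "pd i (omega a3 \<phi> 0 0) p = 0" "pd i (omega a3 \<phi> 1 1) p = 0"
    by (simp_all add: pd_def omega_def)
qed

lemma hess_unique:
  assumes ch: "x12_chart a1 a2 a3 a4 V \<phi>" and hc: "hess_conn a3 V \<phi> \<Gamma>" and pV: "p \<in> V"
    and "k < 2" "i < 2" "j < 2"
  shows "\<Gamma> k i j p = hG a1 a2 a3 a4 k i j p"
proof -
  note hcu = hc[unfolded hess_conn_def]
  note hc1 = conjunct1[OF conjunct2[OF hcu]] and hc2 = conjunct2[OF conjunct2[OF hcu]]
  note H = bspec[OF hc1 pV, rule_format] and Z = bspec[OF hc2 pV, rule_format]
  have sym: "\<And>k i j. k<2 \<Longrightarrow> i<2 \<Longrightarrow> j<2 \<Longrightarrow> \<Gamma> k i j p = \<Gamma> k j i p"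
    using H by blast
  have par: "\<And>k i j. k<2 \<Longrightarrow> i<2 \<Longrightarrow> j<2 \<Longrightarrow> pd i (omega a3 \<phi> j k) p =
          (\<Sum>l<2. \<Gamma> l i j p * omega a3 \<phi> l k p) + (\<Sum>l<2. \<Gamma> l i k p * omega a3 \<phi> j l p)"
    using H by blast
  have z: "\<And>i. i<2 \<Longrightarrow> \<Gamma> 0 i 1 p = 0 \<and> \<Gamma> 1 i 0 p = 0"
    using Z by blast
  have D: "omega a3 \<phi> 0 1 p \<noteq> 0" using ch pV unfolding x12_chart_def omega_def by auto
  note cp = chart_pd[OF ch pV]
  have z1: "\<Gamma> 0 1 0 p = 0" "\<Gamma> 0 0 1 p = 0" "\<Gamma> 0 1 1 p = 0"
     "\<Gamma> 1 0 0 p = 0" "\<Gamma> 1 1 0 p = 0" "\<Gamma> 1 0 1 p = 0"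
    using z[of 0] z[of 1] sym[of 0 1 0] sym[of 1 1 0] by auto
  have om: "omega a3 \<phi> 0 0 p = 0" "omega a3 \<phi> 1 1 p = 0"
    "omega a3 \<phi> 1 0 p = - omega a3 \<phi> 0 1 p" by (simp_all add: omega_def)
  have "pd 0 (omega a3 \<phi> 0 1) p = \<Gamma> 0 0 0 p * omega a3 \<phi> 0 1 p"
    using par[of 1 0 0] z1 by (simp add: sum2 om)
  hence "G0 a1 a2 a3 a4 p * omega a3 \<phi> 0 1 p = \<Gamma> 0 0 0 p * omega a3 \<phi> 0 1 p"
    unfolding cp(1) .
  hence g0: "\<Gamma> 0 0 0 p = G0 a1 a2 a3 a4 p" using D by simp
  have "pd 1 (omega a3 \<phi> 0 1) p = \<Gamma> 1 1 1 p * omega a3 \<phi> 0 1 p"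
    using par[of 1 1 0] z1 by (simp add: sum2 om)
  hence "G1 a1 a2 a3 a4 p * omega a3 \<phi> 0 1 p = \<Gamma> 1 1 1 p * omega a3 \<phi> 0 1 p"
    unfolding cp(2) .
  hence g1: "\<Gamma> 1 1 1 p = G1 a1 a2 a3 a4 p" using D by simp
  have "k=0 \<or> k=1" "i=0 \<or> i=1" "j=0 \<or> j=1" using assms(4-6) by auto
  then show ?thesis by (elim disjE) (simp_all add: hG_def g0 g1 z1 g1[unfolded One_nat_def] z1[unfolded One_nat_def])
qed

lemma curv_cong:
  assumes "open V" "p \<in> V" "\<And>q k i j. q \<in> V \<Longrightarrow> k<2 \<Longrightarrow> i<2 \<Longrightarrow> j<2 \<Longrightarrow> \<Gamma> k i j q = \<Gamma>' k i j q"
    "l<2" "k<2" "i<2" "j<2"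
  shows "curv \<Gamma> l k i j p = curv \<Gamma>' l k i j p"
proof -
  have "pd i (\<Gamma> l j k) p = pd i (\<Gamma>' l j k) p"
    by (rule pd_cong[OF assms(1,2)], rule assms(3)) (use assms(4-7) in auto)
  moreover have "pd j (\<Gamma> l i k) p = pd j (\<Gamma>' l i k) p"
    by (rule pd_cong[OF assms(1,2)], rule assms(3)) (use assms(4-7) in auto)
  moreover have "\<Gamma> a b c p = \<Gamma>' a b c p" if "a<2" "b<2" "c<2" for a b c
    using assms(2,3) that by blast
  ultimately show ?thesis unfolding curv_def sum2 using assms(4-7) by simp
qed

lemma curv_hG:
  assumes "l<2" "k<2" "i<2" "j<2"
  shows "curv (hG a1 a2 a3 a4) l k i j p =
    (if l=0 \<and> k=0 \<and> i=0 \<and> j=1 then - pd 1 (G0 a1 a2 a3 a4) p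
     else if l=0 \<and> k=0 \<and> i=1 \<and> j=0 then pd 1 (G0 a1 a2 a3 a4) p
     else if l=1 \<and> k=1 \<and> i=0 \<and> j=1 then pd 0 (G1 a1 a2 a3 a4) p
     else if l=1 \<and> k=1 \<and> i=1 \<and> j=0 then - pd 0 (G1 a1 a2 a3 a4) p else 0)"
proof -
  have "l=0 \<or> l=1" "k=0 \<or> k=1" "i=0 \<or> i=1" "j=0 \<or> j=1" using assms by auto
  then show ?thesis unfolding curv_def sum2 by (elim disjE) (simp_all add: hG_def)
qed

lemma flat_hG:
  "flat_on V (hG a1 a2 a3 a4) \<longleftrightarrow> (\<forall>p\<in>V. pd 1 (G0 a1 a2 a3 a4) p = 0 \<and> pd 0 (G1 a1 a2 a3 a4) p = 0)"
proof
  assume F: "flat_on V (hG a1 a2 a3 a4)"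
  show "\<forall>p\<in>V. pd 1 (G0 a1 a2 a3 a4) p = 0 \<and> pd 0 (G1 a1 a2 a3 a4) p = 0"
  proof
    fix p assume pV: "p \<in> V"
    note F' = F[unfolded flat_on_def, rule_format, OF pV]
    have "curv (hG a1 a2 a3 a4) 0 0 0 1 p = 0" "curv (hG a1 a2 a3 a4) 1 1 0 1 p = 0"
      by (rule F'; simp)+
    then show "pd 1 (G0 a1 a2 a3 a4) p = 0 \<and> pd 0 (G1 a1 a2 a3 a4) p = 0"
      using curv_hG[of 0 0 0 1 a1 a2 a3 a4 p] curv_hG[of 1 1 0 1 a1 a2 a3 a4 p] by simp
  qed
next
  assume A: "\<forall>p\<in>V. pd 1 (G0 a1 a2 a3 a4) p = 0 \<and> pd 0 (G1 a1 a2 a3 a4) p = 0"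
  show "flat_on V (hG a1 a2 a3 a4)"
    unfolding flat_on_def
  proof (intro ballI allI impI)
    fix p and l k i j :: nat assume "p \<in> V" "l<2" "k<2" "i<2" "j<2"
    then show "curv (hG a1 a2 a3 a4) l k i j p = 0" using A curv_hG[of l k i j] by simp
  qed
qed

lemma flat_iff:
  assumes ch: "x12_chart a1 a2 a3 a4 V \<phi>" and hc: "hess_conn a3 V \<phi> \<Gamma>"
  shows "flat_on V \<Gamma> \<longleftrightarrow> flat_on V (hG a1 a2 a3 a4)"
proof -
  have oV: "open V" using ch unfolding x12_chart_def by auto
  have eq: "\<And>p l k i j. p \<in> V \<Longrightarrow> l<2 \<Longrightarrow> k<2 \<Longrightarrow> i<2 \<Longrightarrow> j<2 \<Longrightarrow> curv \<Gamma> l k i j p = curv (hG a1 a2 a3 a4) l k i j p"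
    by (rule curv_cong[OF oV]) (assumption | rule hess_unique[OF ch hc])+
  show ?thesis unfolding flat_on_def
  proof (intro iffI ballI allI impI)
    fix p and l k i j :: nat assume A: "\<forall>p\<in>V. \<forall>l<2. \<forall>k<2. \<forall>i<2. \<forall>j<2. curv \<Gamma> l k i j p = 0"
      "p \<in> V" "l<2" "k<2" "i<2" "j<2"
    then show "curv (hG a1 a2 a3 a4) l k i j p = 0" using eq[of p l k i j] by simp
  next
    fix p and l k i j :: nat assume A: "\<forall>p\<in>V. \<forall>l<2. \<forall>k<2. \<forall>i<2. \<forall>j<2. curv (hG a1 a2 a3 a4) l k i j p = 0"
      "p \<in> V" "l<2" "k<2" "i<2" "j<2"
    then show "curv \<Gamma> l k i j p = 0" using eq[of p l k i j] by simp
  qed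
qed

lemma cancel_aux: "(a::complex) \<noteq> 0 \<Longrightarrow> b \<noteq> 0 \<Longrightarrow> - (2*x*b) / (2*(a*b)) = - x / a"
  by (simp add: frac_eq_eq)

lemma cancel_aux2: "(a::complex) \<noteq> 0 \<Longrightarrow> b \<noteq> 0 \<Longrightarrow> - (2*x*b) / (2*(b*a)) = - x / a"
  by (simp add: frac_eq_eq)

lemma flat_special:
  assumes ch: "x12_chart 0 0 0 4 V \<phi>" and pV: "p \<in> V"
  shows "pd 1 (G0 0 0 0 4) p = 0 \<and> pd 0 (G1 0 0 0 4) p = 0"
proof -
  have oV: "open V" using ch unfolding x12_chart_def by auto
  have Dlnz: "Dl 0 0 0 4 (fst q) (snd q) \<noteq> 0" if "q \<in> V" for q
  proof -
    have "(2 * \<phi> q + fst q * snd q - 0)^2 = Dl 0 0 0 4 (fst q) (snd q)"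
      using ch that unfolding x12_chart_def on_S_iff by auto
    moreover have "2 * \<phi> q + fst q * snd q - 0 \<noteq> 0" using ch that unfolding x12_chart_def by auto
    ultimately show ?thesis by auto
  qed
  have fac: "Dl 0 0 0 4 x y = (x^2 - 4) * (y^2 - 4)" for x y
    by (simp add: Dl_def algebra_simps power2_eq_square)
  have du: "Du 0 0 x y = 2 * x * (y ^ 2 - 4)" for x y by (simp add: Du_def algebra_simps power2_eq_square)
  have dv: "Dv 0 0 x y = 2 * y * (x ^ 2 - 4)" for x y by (simp add: Dv_def algebra_simps power2_eq_square)
  have "G0 0 0 0 4 q = - fst q / (fst q ^ 2 - 4)" if "q \<in> V" for q
  proof -
    have "(fst q ^ 2 - 4) \<noteq> 0" "(snd q ^ 2 - 4) \<noteq> 0" using Dlnz[OF that] fac by auto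
    then show ?thesis unfolding G0_def fac du by (rule cancel_aux)
  qed
  then have 1: "pd 1 (G0 0 0 0 4) p = pd 1 (\<lambda>q. - fst q / (fst q ^ 2 - 4)) p"
    by (rule pd_cong[OF oV pV])
  have "G1 0 0 0 4 q = - snd q / (snd q ^ 2 - 4)" if "q \<in> V" for q
  proof -
    have "(snd q ^ 2 - 4) \<noteq> 0" "(fst q ^ 2 - 4) \<noteq> 0" using Dlnz[OF that] fac by auto
    then show ?thesis unfolding G1_def fac dv by (rule cancel_aux2)
  qed
  then have 2: "pd 0 (G1 0 0 0 4) p = pd 0 (\<lambda>q. - snd q / (snd q ^ 2 - 4)) p"
    by (rule pd_cong[OF oV pV])
  show ?thesis unfolding 1 2 by (simp add: pd_def)
qed

lemma holo2_cd: "holo2 V f \<longleftrightarrow> (\<forall>p\<in>V. cd f p)"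
  by (simp add: holo2_def cd_def)

lemma Du_dy: "((\<lambda>t. Du a1 a3 x t) has_field_derivative (4*x*y - 2*a3)) (at y)"
  unfolding Du_def
  by (rule derivative_eq_intros refl | simp)+

lemma cd_Dl: "cd (\<lambda>q. Dl a1 a2 a3 a4 (fst q) (snd q)) p"
  unfolding Dl_def
  by (intro cd_diff cd_mult cd_power cd_add cd_const cd_fst cd_snd)

lemma cd_G0: "Dl a1 a2 a3 a4 (fst p) (snd p) \<noteq> 0 \<Longrightarrow> cd (G0 a1 a2 a3 a4) p"
  unfolding G0_def[abs_def] Du_def
  by (intro cd_divide cd_uminus cd_diff cd_mult cd_power cd_add cd_const cd_fst cd_snd cd_Dl) simp

lemma cd_G1: "Dl a1 a2 a3 a4 (fst p) (snd p) \<noteq> 0 \<Longrightarrow> cd (G1 a1 a2 a3 a4) p"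
  unfolding G1_def[abs_def] Dv_def
  by (intro cd_divide cd_uminus cd_diff cd_mult cd_power cd_add cd_const cd_fst cd_snd cd_Dl) simp

lemma pd_G0_val:
  assumes "Dl a1 a2 a3 a4 x y \<noteq> 0"
  shows "pd 1 (G0 a1 a2 a3 a4) (x, y) = - Pf a1 a2 a3 a4 x y / (2 * (Dl a1 a2 a3 a4 x y)^2)"
proof -
  have "((\<lambda>t. - Du a1 a3 x t / (2 * Dl a1 a2 a3 a4 x t)) has_field_derivative
          - Pf a1 a2 a3 a4 x y / (2 * (Dl a1 a2 a3 a4 x y)^2)) (at y)"
    by (rule derivative_eq_intros Du_dy Dl_dy refl)+
       (use assms in \<open>simp_all add: Pf_def field_simps power2_eq_square\<close>)
  then have "deriv (\<lambda>t. - Du a1 a3 x t / (2 * Dl a1 a2 a3 a4 x t)) y =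
          - Pf a1 a2 a3 a4 x y / (2 * (Dl a1 a2 a3 a4 x y)^2)"
    by (rule DERIV_imp_deriv)
  then show ?thesis by (simp add: pd_def G0_def)
qed

lemma not_flat:
  assumes "\<not> (a1 = 0 \<and> a2 = 0 \<and> a3 = 0 \<and> a4 = 4)"
  shows "\<not> hess_flat a1 a2 a3 a4"
proof
  assume HF: "hess_flat a1 a2 a3 a4"
  obtain x0 y0 where P0: "Dl a1 a2 a3 a4 x0 y0 \<noteq> 0" "Pf a1 a2 a3 a4 x0 y0 \<noteq> 0"
    using exists_point[OF assms] by blast
  define dl where "dl = (\<lambda>q. Dl a1 a2 a3 a4 (fst q) (snd q))"
  define c where "c = csqrt (Dl a1 a2 a3 a4 x0 y0)"
  have c2: "c^2 = Dl a1 a2 a3 a4 x0 y0" unfolding c_def by simp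
  have cnz: "c \<noteq> 0" using c2 P0 by auto
  define V where "V = {q. 0 < Re (dl q / c^2)}"
  define \<phi> where "\<phi> = (\<lambda>q. (-(fst q * snd q - a3) + c * csqrt (dl q / c^2)) / 2)"
  have p0V: "(x0, y0) \<in> V" unfolding V_def dl_def c2 using P0 by simp
  have oV: "open V" unfolding V_def dl_def Dl_def
    by (rule open_Collect_less) (intro continuous_intros | simp add: cnz)+
  have dlnz: "dl q \<noteq> 0" if "q \<in> V" for q
    using that unfolding V_def by auto
  have cd_dl: "cd dl q" for q unfolding dl_def by (rule cd_Dl)
  have cd_phi: "cd \<phi> q" if "q \<in> V" for q
  proof -
    have "cd (\<lambda>q. dl q / c^2) q" by (intro cd_divide cd_dl cd_const) (simp add: cnz)
    moreover have "0 < Re (dl q / c^2)" using that unfolding V_def by simp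
    ultimately have "cd (\<lambda>q. csqrt (dl q / c^2)) q" by (rule cd_csqrt)
    then show ?thesis unfolding \<phi>_def
      by (intro cd_divide cd_add cd_uminus cd_diff cd_mult cd_const cd_fst cd_snd) simp_all
  qed
  have Deq: "2 * \<phi> q + fst q * snd q - a3 = c * csqrt (dl q / c^2)" for q
    unfolding \<phi>_def by (simp add: field_simps)
  have Dsq: "(2 * \<phi> q + fst q * snd q - a3)^2 = dl q" for q
    unfolding Deq power_mult_distrib using cnz by simp
  have Dnz: "2 * \<phi> q + fst q * snd q - a3 \<noteq> 0" if "q \<in> V" for q
    unfolding Deq using cnz dlnz[OF that] by simp
  have ch: "x12_chart a1 a2 a3 a4 V \<phi>"
    unfolding x12_chart_def
  proof (intro conjI ballI)
    show "open V" by (rule oV)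
    show "holo2 V \<phi>" unfolding holo2_cd using cd_phi by blast
  next
    fix q assume "q \<in> V"
    show "on_S a1 a2 a3 a4 (fst q) (snd q) (\<phi> q)" unfolding on_S_iff Dsq dl_def ..
    show "2 * \<phi> q + fst q * snd q - a3 \<noteq> 0" by (rule Dnz) fact
  qed
  have hc: "hess_conn a3 V \<phi> (hG a1 a2 a3 a4)"
    unfolding hess_conn_def
  proof (intro conjI)
    show "\<forall>i<2. \<forall>j<2. \<forall>k<2. holo2 V (hG a1 a2 a3 a4 k i j)"
    proof (intro allI impI)
      fix i j k :: nat
      show "holo2 V (hG a1 a2 a3 a4 k i j)"
        unfolding holo2_cd hG_def
      proof
        fix q assume qV: "q \<in> V"
        have "Dl a1 a2 a3 a4 (fst q) (snd q) \<noteq> 0" using dlnz[OF qV] unfolding dl_def .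
        then show "cd (if k = 0 \<and> i = 0 \<and> j = 0 then G0 a1 a2 a3 a4
            else if k = 1 \<and> i = 1 \<and> j = 1 then G1 a1 a2 a3 a4 else (\<lambda>_. 0)) q"
          using cd_G0 cd_G1 by simp
      qed
    qed
    show "\<forall>p\<in>V. \<forall>i<2. \<forall>j<2. \<forall>k<2.
        hG a1 a2 a3 a4 k i j p = hG a1 a2 a3 a4 k j i p \<and>
        pd i (omega a3 \<phi> j k) p =
          (\<Sum>l<2. hG a1 a2 a3 a4 l i j p * omega a3 \<phi> l k p) +
          (\<Sum>l<2. hG a1 a2 a3 a4 l i k p * omega a3 \<phi> j l p)"
    proof
      fix p assume pV: "p \<in> V"
      note cp = chart_pd[OF ch pV]
      have om: "omega a3 \<phi> 0 0 p = 0" "omega a3 \<phi> 1 1 p = 0"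
        "omega a3 \<phi> 1 0 p = - omega a3 \<phi> 0 1 p" by (simp_all add: omega_def)
      show "\<forall>i<2. \<forall>j<2. \<forall>k<2.
        hG a1 a2 a3 a4 k i j p = hG a1 a2 a3 a4 k j i p \<and>
        pd i (omega a3 \<phi> j k) p =
          (\<Sum>l<2. hG a1 a2 a3 a4 l i j p * omega a3 \<phi> l k p) +
          (\<Sum>l<2. hG a1 a2 a3 a4 l i k p * omega a3 \<phi> j l p)"
        unfolding all_less2 sum2 by (simp add: hG_def cp om cp[unfolded One_nat_def] om[unfolded One_nat_def])
    qed
    show "\<forall>p\<in>V. \<forall>i<2. hG a1 a2 a3 a4 0 i 1 p = 0 \<and> hG a1 a2 a3 a4 1 i 0 p = 0"
      by (simp add: hG_def)
  qed
  have "flat_on V (hG a1 a2 a3 a4)"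
    using HF ch hc flat_iff unfolding hess_flat_def by blast
  then have "pd 1 (G0 a1 a2 a3 a4) (x0, y0) = 0"
    using p0V unfolding flat_hG by blast
  moreover have "pd 1 (G0 a1 a2 a3 a4) (x0, y0) \<noteq> 0"
    unfolding pd_G0_val[OF P0(1)] using P0 by simp
  ultimately show False by contradiction
qed

theorem theorem1p2:
  fixes a1 a2 a3 a4 :: complex
  shows "hess_flat a1 a2 a3 a4 \<longleftrightarrow> (a1 = 0 \<and> a2 = 0 \<and> a3 = 0 \<and> a4 = 4)"
proof
  assume "hess_flat a1 a2 a3 a4"
  then show "a1 = 0 \<and> a2 = 0 \<and> a3 = 0 \<and> a4 = 4" using not_flat by blast
next
  assume a: "a1 = 0 \<and> a2 = 0 \<and> a3 = 0 \<and> a4 = 4"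
  have "hess_flat 0 0 0 4"
    unfolding hess_flat_def
  proof (intro allI impI)
    fix V \<phi> \<Gamma> assume A: "x12_chart 0 0 0 4 V \<phi> \<and> hess_conn 0 V \<phi> \<Gamma>"
    have "flat_on V (hG 0 0 0 4)" unfolding flat_hG using flat_special[OF conjunct1[OF A]] by blast
    then show "flat_on V \<Gamma>" using flat_iff[OF conjunct1[OF A] conjunct2[OF A]] by simp
  qed
  then show "hess_flat a1 a2 a3 a4" using a by simp
qed

end
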